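(* Let $n\ge 2$, $k\ge 1$ and $b\in B_n$. Then $b=h^{2k}$ for some half-twist $h\in B_n$ with $\pi(h)=(1,n)$ if and only if $b\in A_n$ and $b$ is conjugate to $a_{n-1}^k$ within $A_n$, i.e. $b=P^{-1}a_{n-1}^kP$ for some $P\in A_n$.
   Context: $B_n$ is Artin's braid group with generators $\sigma_1,\dots,\sigma_{n-1}$; $\pi:B_n\to S_n$ is the homomorphism with $\pi(\sigma_i)=(i,i+1)$. A half-twist is an element of the conjugacy class of $\sigma_1$ in $B_n$. For $1\le i\le n-1$ let $a_i=\sigma_1\cdots\sigma_{i-1}\sigma_i^2\sigma_{i-1}^{-1}\cdots\sigma_1^{-1}$, and let $A_n$ be the subgroup of $B_n$ generated by $a_1,\dots,a_{n-1}$ (the "combed braids"); $A_n$ is a free group on $a_1,\dots,a_{n-1}$. *)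

theory Defs
  imports "HOL-Algebra.Generated_Groups" "HOL-Combinatorics.Transposition"
begin

text \<open>Braid words: a letter (i, True) stands for sigma_i, (i, False) for sigma_i^-1.\<close>
type_synonym bword = "(nat \<times> bool) list"

definition valid_word :: "nat \<Rightarrow> bword \<Rightarrow> bool" where
  "valid_word n w \<longleftrightarrow> (\<forall>(i, e) \<in> set w. 1 \<le> i \<and> i < n)"

inductive braid_step :: "nat \<Rightarrow> bword \<Rightarrow> bword \<Rightarrow> bool" for n where
  cancel: "valid_word n (u @ [(i, e), (i, \<not> e)] @ v) \<Longrightarrow>
     braid_step n (u @ [(i, e), (i, \<not> e)] @ v) (u @ v)"
| comm: "Suc i < j \<Longrightarrow> valid_word n (u @ [(i, True), (j, True)] @ v) \<Longrightarrow>
     braid_step n (u @ [(i, True), (j, True)] @ v) (u @ [(j, True), (i, True)] @ v)"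
| braid: "valid_word n (u @ [(i, True), (Suc i, True), (i, True)] @ v) \<Longrightarrow>
     braid_step n (u @ [(i, True), (Suc i, True), (i, True)] @ v)
                  (u @ [(Suc i, True), (i, True), (Suc i, True)] @ v)"

definition braid_rel :: "nat \<Rightarrow> (bword \<times> bword) set" where
  "braid_rel n = {(u, v). valid_word n u \<and> (sup (braid_step n) (braid_step n)\<inverse>\<inverse>)\<^sup>*\<^sup>* u v}"

text \<open>Artin's braid group B_n = <sigma_1..sigma_(n-1) | relations> as classes of words.\<close>
definition braid_group :: "nat \<Rightarrow> bword set monoid" where
  "braid_group n = \<lparr> carrier = {w. valid_word n w} // braid_rel n,
     mult = (\<lambda>X Y. braid_rel n `` {(SOME x. x \<in> X) @ (SOME y. y \<in> Y)}),
     one = braid_rel n `` {[]} \<rparr>"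

definition sigma :: "nat \<Rightarrow> nat \<Rightarrow> bword set" where
  "sigma n i = braid_rel n `` {[(i, True)]}"

definition word_perm :: "bword \<Rightarrow> nat \<Rightarrow> nat" where
  "word_perm w = foldr (\<lambda>(i, e) p. transpose i (Suc i) \<circ> p) w id"

definition braid_perm :: "bword set \<Rightarrow> nat \<Rightarrow> nat" where
  "braid_perm X = word_perm (SOME w. w \<in> X)"

definition half_twist :: "nat \<Rightarrow> bword set \<Rightarrow> bool" where
  "half_twist n h \<longleftrightarrow> (\<exists>g \<in> carrier (braid_group n).
      h = g \<otimes>\<^bsub>braid_group n\<^esub> sigma n 1 \<otimes>\<^bsub>braid_group n\<^esub> inv\<^bsub>braid_group n\<^esub> g)"

definition a_word :: "nat \<Rightarrow> bword" where
  "a_word i = map (\<lambda>j. (j, True)) [1..<i] @ [(i, True), (i, True)]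
              @ map (\<lambda>j. (j, False)) (rev [1..<i])"

definition a_elem :: "nat \<Rightarrow> nat \<Rightarrow> bword set" where
  "a_elem n i = braid_rel n `` {a_word i}"

definition combed :: "nat \<Rightarrow> bword set set" where
  "combed n = generate (braid_group n) {a_elem n i | i. 1 \<le> i \<and> i \<le> n - 1}"

end

theory Submission
  imports Defs
begin

lemma valid_append[simp]: "valid_word n (u @ v) \<longleftrightarrow> valid_word n u \<and> valid_word n v"
  by (auto simp: valid_word_def)

lemma valid_Cons[simp]: "valid_word n (x # v) \<longleftrightarrow> (1 \<le> fst x \<and> fst x < n) \<and> valid_word n v"
  by (cases x) (auto simp: valid_word_def)

lemma valid_Nil[simp]: "valid_word n []"
  by (auto simp: valid_word_def)

lemma step_valid: "braid_step n x y \<Longrightarrow> valid_word n x \<and> valid_word n y"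
  by (induction rule: braid_step.induct) auto

abbreviation R :: "nat \<Rightarrow> bword \<Rightarrow> bword \<Rightarrow> bool" where
  "R n \<equiv> sup (braid_step n) (braid_step n)\<inverse>\<inverse>"

lemma R_valid: "R n x y \<Longrightarrow> valid_word n x \<and> valid_word n y"
  using step_valid by auto

lemma R_sym: "R n x y \<Longrightarrow> R n y x"
  by auto

lemma Rs_valid: "(R n)\<^sup>*\<^sup>* x y \<Longrightarrow> valid_word n x \<Longrightarrow> valid_word n y"
  by (induction rule: rtranclp_induct) (auto dest: step_valid)

lemma Rs_sym: "(R n)\<^sup>*\<^sup>* x y \<Longrightarrow> (R n)\<^sup>*\<^sup>* y x"
proof (induction rule: rtranclp_induct)
  case base then show ?case by simp
next
  case (step y z)
  then show ?case by (meson R_sym converse_rtranclp_into_rtranclp)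
qed

lemma step_app:
  assumes "braid_step n x y" "valid_word n v"
  shows "braid_step n (v @ x) (v @ y) \<and> braid_step n (x @ v) (y @ v)"
  using assms
proof (induction rule: braid_step.induct)
  case (cancel u i e w)
  show ?case using cancel braid_step.cancel[of n "v @ u" i e w] braid_step.cancel[of n u i e "w @ v"]
    by simp
next
  case (comm i j u w)
  show ?case using comm braid_step.comm[of i j n "v @ u" w] braid_step.comm[of i j n u "w @ v"]
    by simp
next
  case (braid u i w)
  show ?case using braid braid_step.braid[of n "v @ u" i w] braid_step.braid[of n u i "w @ v"]
    by simp
qed

lemma Rs_app:
  assumes "(R n)\<^sup>*\<^sup>* x y" "valid_word n v"
  shows "(R n)\<^sup>*\<^sup>* (v @ x) (v @ y) \<and> (R n)\<^sup>*\<^sup>* (x @ v) (y @ v)"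
  using assms(1)
proof (induction rule: rtranclp_induct)
  case base then show ?case by simp
next
  case (step y z)
  then have "R n (v @ y) (v @ z) \<and> R n (y @ v) (z @ v)"
    using step_app[OF _ assms(2)] by auto
  then show ?case using step by (meson rtranclp.rtrancl_into_rtrancl)
qed

lemma rel_iff: "(u, v) \<in> braid_rel n \<longleftrightarrow> valid_word n u \<and> (R n)\<^sup>*\<^sup>* u v"
  by (simp add: braid_rel_def)

lemma equiv_rel: "equiv {w. valid_word n w} (braid_rel n)"
proof (rule equivI)
  show "refl_on {w. valid_word n w} (braid_rel n)"
    by (auto simp: refl_on_def rel_iff)
  show "sym (braid_rel n)"
    unfolding sym_def rel_iff by (metis Rs_valid Rs_sym)
  show "trans (braid_rel n)"
    by (auto simp: trans_def rel_iff intro: rtranclp_trans)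
  show "braid_rel n \<subseteq> {w. valid_word n w} \<times> {w. valid_word n w}"
    unfolding rel_iff by (auto simp: rel_iff) (metis Rs_valid)
qed

lemma rel_cong:
  assumes "(x, x') \<in> braid_rel n" "(y, y') \<in> braid_rel n"
  shows "(x @ y, x' @ y') \<in> braid_rel n"
proof -
  have vx: "valid_word n x'" "valid_word n x" using assms Rs_valid by (auto simp: rel_iff)
  have vy: "valid_word n y'" "valid_word n y" using assms Rs_valid by (auto simp: rel_iff)
  have "(R n)\<^sup>*\<^sup>* (x @ y) (x' @ y)" using Rs_app[of n x x' y] assms vy by (auto simp: rel_iff)
  moreover have "(R n)\<^sup>*\<^sup>* (x' @ y) (x' @ y')" using Rs_app[of n y y' x'] assms vx by (auto simp: rel_iff)
  ultimately show ?thesis using vx vy by (auto simp: rel_iff)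
qed

definition cls :: "nat \<Rightarrow> bword \<Rightarrow> bword set" where
  "cls n w = braid_rel n `` {w}"

lemma cls_eq: "(x, y) \<in> braid_rel n \<Longrightarrow> cls n x = cls n y"
  unfolding cls_def using equiv_rel by (rule equiv_class_eq)

lemma cls_self: "valid_word n x \<Longrightarrow> x \<in> cls n x"
  unfolding cls_def by (auto simp: rel_iff)

lemma in_cls: "y \<in> cls n x \<Longrightarrow> (x, y) \<in> braid_rel n"
  unfolding cls_def by auto

lemma carrier_G: "carrier (braid_group n) = {cls n w | w. valid_word n w}"
  unfolding braid_group_def cls_def quotient_def by auto

lemma cls_in_G[simp]: "valid_word n w \<Longrightarrow> cls n w \<in> carrier (braid_group n)"
  unfolding carrier_G by auto

lemma some_cls: "valid_word n x \<Longrightarrow> (x, SOME y. y \<in> cls n x) \<in> braid_rel n"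
  by (metis cls_self in_cls someI)

lemma mult_cls: "valid_word n x \<Longrightarrow> valid_word n y \<Longrightarrow>
   cls n x \<otimes>\<^bsub>braid_group n\<^esub> cls n y = cls n (x @ y)"
proof -
  assume vx: "valid_word n x" and vy: "valid_word n y"
  have "(x @ y, (SOME x'. x' \<in> cls n x) @ (SOME y'. y' \<in> cls n y)) \<in> braid_rel n"
    using rel_cong some_cls vx vy by blast
  then have "cls n ((SOME x'. x' \<in> cls n x) @ (SOME y'. y' \<in> cls n y)) = cls n (x @ y)"
    using cls_eq by metis
  then show ?thesis unfolding braid_group_def by (simp add: cls_def)
qed

lemma one_cls: "\<one>\<^bsub>braid_group n\<^esub> = cls n []"
  by (simp add: braid_group_def cls_def)

definition winv :: "bword \<Rightarrow> bword" where
  "winv w = rev (map (\<lambda>(i, e). (i, \<not> e)) w)"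

lemma winv_simps[simp]: "winv [] = []" "winv (x # w) = winv w @ [(fst x, \<not> snd x)]"
  "winv (u @ v) = winv v @ winv u"
  by (auto simp: winv_def split: prod.splits)

lemma winv_winv[simp]: "winv (winv w) = w"
  by (induction w) auto

lemma valid_winv[simp]: "valid_word n (winv w) \<longleftrightarrow> valid_word n w"
  by (induction w) auto

lemma rinv_cancel: "valid_word n w \<Longrightarrow> (w @ winv w, []) \<in> braid_rel n"
proof (induction w)
  case Nil then show ?case by (simp add: rel_iff)
next
  case (Cons x w)
  obtain i e where x: "x = (i, e)" by (cases x)
  have "(R n)\<^sup>*\<^sup>* ([x] @ (w @ winv w) @ [(i, \<not> e)]) ([x] @ [] @ [(i, \<not> e)])"
    using Cons Rs_app[of n "w @ winv w" "[]" "[x]"] Rs_app[of n "[x] @ w @ winv w" "[x]" "[(i, \<not> e)]"]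
    by (auto simp: rel_iff x)
  moreover have "braid_step n ([] @ [(i, e), (i, \<not> e)] @ []) ([] @ [])"
    using Cons by (intro braid_step.cancel) (simp add: x)
  ultimately have "(R n)\<^sup>*\<^sup>* ((x # w) @ winv (x # w)) []"
    by (simp add: x) (meson r_into_rtranclp rtranclp_trans sup2I1)
  then show ?case using Cons by (simp add: rel_iff)
qed

lemma group_G: "group (braid_group n)"
proof (rule groupI)
  fix x y assume "x \<in> carrier (braid_group n)" "y \<in> carrier (braid_group n)"
  then show "x \<otimes>\<^bsub>braid_group n\<^esub> y \<in> carrier (braid_group n)"
    unfolding carrier_G using mult_cls by fastforce
next
  show "\<one>\<^bsub>braid_group n\<^esub> \<in> carrier (braid_group n)" by (simp add: one_cls)
next
  fix x y z assume "x \<in> carrier (braid_group n)" "y \<in> carrier (braid_group n)" "z \<in> carrier (braid_group n)"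
  then show "x \<otimes>\<^bsub>braid_group n\<^esub> y \<otimes>\<^bsub>braid_group n\<^esub> z =
     x \<otimes>\<^bsub>braid_group n\<^esub> (y \<otimes>\<^bsub>braid_group n\<^esub> z)"
    unfolding carrier_G by (auto simp: mult_cls)
next
  fix x assume "x \<in> carrier (braid_group n)"
  then show "\<one>\<^bsub>braid_group n\<^esub> \<otimes>\<^bsub>braid_group n\<^esub> x = x"
    unfolding carrier_G by (auto simp: mult_cls one_cls)
next
  fix x assume "x \<in> carrier (braid_group n)"
  then obtain w where w: "valid_word n w" "x = cls n w" unfolding carrier_G by auto
  have "(winv w @ winv (winv w), []) \<in> braid_rel n" using rinv_cancel[of n "winv w"] w by simp
  then have "cls n (winv w) \<otimes>\<^bsub>braid_group n\<^esub> x = \<one>\<^bsub>braid_group n\<^esub>"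
    using w by (simp add: mult_cls one_cls cls_eq)
  then show "\<exists>y\<in>carrier (braid_group n). y \<otimes>\<^bsub>braid_group n\<^esub> x = \<one>\<^bsub>braid_group n\<^esub>"
    using w by (metis cls_in_G valid_winv)
qed

lemma inv_cls: "valid_word n w \<Longrightarrow> inv\<^bsub>braid_group n\<^esub> (cls n w) = cls n (winv w)"
proof -
  assume w: "valid_word n w"
  interpret group "braid_group n" by (rule group_G)
  have "(winv w @ winv (winv w), []) \<in> braid_rel n" using rinv_cancel[of n "winv w"] w by simp
  then have "cls n (winv w) \<otimes>\<^bsub>braid_group n\<^esub> cls n w = \<one>\<^bsub>braid_group n\<^esub>"
    using w by (simp add: mult_cls one_cls cls_eq)
  then show ?thesis using inv_equality w by simp
qed

lemma word_perm_append: "word_perm (u @ v) = word_perm u \<circ> word_perm v"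
  by (induction u) (auto simp: word_perm_def)

lemma word_perm_simps[simp]: "word_perm [] = id" "word_perm ((i, e) # w) = transpose i (Suc i) \<circ> word_perm w"
  by (auto simp: word_perm_def)

lemma perm_step: "braid_step n x y \<Longrightarrow> word_perm x = word_perm y"
proof (induction rule: braid_step.induct)
  case (cancel u i e v)
  have "\<And>f. Transposition.transpose i (Suc i) \<circ> (Transposition.transpose i (Suc i) \<circ> f) = f"
    by (rule ext) simp
  then have h: "\<And>f. Transposition.transpose i (Suc i) \<circ> (Transposition.transpose i (Suc i) \<circ> f) = f" .
  have "word_perm (u @ [(i, e), (i, \<not> e)] @ v) = word_perm u \<circ> (Transposition.transpose i (Suc i) \<circ> (Transposition.transpose i (Suc i) \<circ> word_perm v))"
    by (simp add: word_perm_append)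
  also have "\<dots> = word_perm (u @ v)" by (simp only: h word_perm_append)
  finally show ?case .
next
  case (comm i j u v)
  have "transpose i (Suc i) \<circ> transpose j (Suc j) = transpose j (Suc j) \<circ> transpose i (Suc i)"
    using comm by (intro ext) (auto simp: transpose_def)
  then show ?case by (simp add: word_perm_def foldr_append o_assoc)
next
  case (braid u i v)
  have "transpose i (Suc i) \<circ> transpose (Suc i) (Suc (Suc i)) \<circ> transpose i (Suc i) =
        transpose (Suc i) (Suc (Suc i)) \<circ> transpose i (Suc i) \<circ> transpose (Suc i) (Suc (Suc i))"
    by (intro ext) (auto simp: transpose_def)
  then show ?case by (simp add: word_perm_def foldr_append o_assoc)
qed

lemma perm_rel: "(x, y) \<in> braid_rel n \<Longrightarrow> word_perm x = word_perm y"
proof -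
  assume "(x, y) \<in> braid_rel n"
  then have "(R n)\<^sup>*\<^sup>* x y" by (simp add: rel_iff)
  then show ?thesis by (induction rule: rtranclp_induct) (auto dest: perm_step)
qed

lemma braid_perm_cls: "valid_word n w \<Longrightarrow> braid_perm (cls n w) = word_perm w"
  unfolding braid_perm_def using some_cls perm_rel by metis



context group begin
lemma gl_canc1[simp]: "x \<in> carrier G \<Longrightarrow> y \<in> carrier G \<Longrightarrow> inv x \<otimes> (x \<otimes> y) = y"
  by (metis m_assoc inv_closed l_inv l_one)
lemma gl_canc2[simp]: "x \<in> carrier G \<Longrightarrow> y \<in> carrier G \<Longrightarrow> x \<otimes> (inv x \<otimes> y) = y"
  by (metis m_assoc inv_closed r_inv l_one)
lemma gl_ctx: "x \<otimes> y = u \<otimes> v \<Longrightarrow> x \<in> carrier G \<Longrightarrow> y \<in> carrier G \<Longrightarrow> u \<in> carrier G \<Longrightarrow> v \<in> carrier G \<Longrightarrow> z \<in> carrier G \<Longrightarrow>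
  x \<otimes> (y \<otimes> z) = u \<otimes> (v \<otimes> z)"
  by (metis m_assoc)
lemma gl_conj_prod: "b \<in> carrier G \<Longrightarrow> q \<in> carrier G \<Longrightarrow> x \<in> carrier G \<Longrightarrow>
  b \<otimes> (q \<otimes> x \<otimes> inv q) \<otimes> inv b = (b \<otimes> q \<otimes> inv b) \<otimes> (b \<otimes> x \<otimes> inv b) \<otimes> inv (b \<otimes> q \<otimes> inv b)"
  by (simp add: m_assoc inv_mult_group)
lemma gl_conj_mult: "b \<in> carrier G \<Longrightarrow> c \<in> carrier G \<Longrightarrow> x \<in> carrier G \<Longrightarrow>
  (b \<otimes> c) \<otimes> x \<otimes> inv (b \<otimes> c) = b \<otimes> (c \<otimes> x \<otimes> inv c) \<otimes> inv b"
  by (simp add: m_assoc inv_mult_group)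
lemma gl_conj_inv: "b \<in> carrier G \<Longrightarrow> x \<in> carrier G \<Longrightarrow>
  b \<otimes> inv x \<otimes> inv b = inv (b \<otimes> x \<otimes> inv b)"
  by (simp add: m_assoc inv_mult_group)
lemma gl_conj_split: "b \<in> carrier G \<Longrightarrow> x \<in> carrier G \<Longrightarrow> y \<in> carrier G \<Longrightarrow>
  b \<otimes> (x \<otimes> y) \<otimes> inv b = (b \<otimes> x \<otimes> inv b) \<otimes> (b \<otimes> y \<otimes> inv b)"
  by (simp add: m_assoc)
lemma gl_swap_inv2: "x \<in> carrier G \<Longrightarrow> w \<in> carrier G \<Longrightarrow> y \<in> carrier G \<Longrightarrow> x \<otimes> w = w \<otimes> y \<Longrightarrow> inv x \<otimes> w = w \<otimes> inv y"
proof -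
  assume c: "x \<in> carrier G" "w \<in> carrier G" "y \<in> carrier G" and h: "x \<otimes> w = w \<otimes> y"
  have "inv x \<otimes> w = inv x \<otimes> (w \<otimes> y) \<otimes> inv y" using c by (simp add: m_assoc)
  also have "\<dots> = inv x \<otimes> (x \<otimes> w) \<otimes> inv y" using h by simp
  also have "\<dots> = w \<otimes> inv y" using c by (simp add: m_assoc)
  finally show ?thesis .
qed
lemma gl_conj_pow: "b \<in> carrier G \<Longrightarrow> y \<in> carrier G \<Longrightarrow> (b \<otimes> y \<otimes> inv b) [^] (k::nat) = b \<otimes> (y [^] k) \<otimes> inv b"
proof (induction k)
  case 0 then show ?case by simp
next
  case (Suc k)
  then show ?case by (simp add: m_assoc)
qed
lemma gl_braid_conj: "x \<in> carrier G \<Longrightarrow> y \<in> carrier G \<Longrightarrow> x \<otimes> y \<otimes> x = y \<otimes> x \<otimes> y \<Longrightarrow>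
  y = (x \<otimes> y) \<otimes> x \<otimes> inv (x \<otimes> y)"
proof -
  assume c: "x \<in> carrier G" "y \<in> carrier G" and b: "x \<otimes> y \<otimes> x = y \<otimes> x \<otimes> y"
  have "(x \<otimes> y) \<otimes> x \<otimes> inv (x \<otimes> y) = (x \<otimes> y \<otimes> x) \<otimes> (inv y \<otimes> inv x)"
    using c by (simp add: m_assoc inv_mult_group)
  also have "\<dots> = (y \<otimes> x \<otimes> y) \<otimes> (inv y \<otimes> inv x)" using b by simp
  also have "\<dots> = y" using c by (simp add: m_assoc)
  finally show ?thesis by simp
qed
lemma gl_swap_inv: "x \<in> carrier G \<Longrightarrow> w \<in> carrier G \<Longrightarrow> y \<in> carrier G \<Longrightarrow> x \<otimes> w = w \<otimes> y \<Longrightarrow> y \<otimes> inv w = inv w \<otimes> x"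
proof -
  assume c: "x \<in> carrier G" "w \<in> carrier G" "y \<in> carrier G" and h: "x \<otimes> w = w \<otimes> y"
  have "y \<otimes> inv w = inv w \<otimes> (w \<otimes> y) \<otimes> inv w" using c by (simp add: m_assoc)
  also have "\<dots> = inv w \<otimes> (x \<otimes> w) \<otimes> inv w" using h by simp
  also have "\<dots> = inv w \<otimes> x" using c by (simp add: m_assoc)
  finally show ?thesis .
qed
lemma gl_cm_inv: "x \<in> carrier G \<Longrightarrow> y \<in> carrier G \<Longrightarrow> x \<otimes> y = y \<otimes> x \<Longrightarrow> x \<otimes> inv y = inv y \<otimes> x"
  using gl_swap_inv[of x y x] by simp
lemma gl_cm_inv2: "x \<in> carrier G \<Longrightarrow> y \<in> carrier G \<Longrightarrow> x \<otimes> y = y \<otimes> x \<Longrightarrow> inv x \<otimes> y = y \<otimes> inv x"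
  using gl_cm_inv[of y x] by simp
lemma gl_cm_mult: "x \<in> carrier G \<Longrightarrow> y \<in> carrier G \<Longrightarrow> z \<in> carrier G \<Longrightarrow> x \<otimes> y = y \<otimes> x \<Longrightarrow> x \<otimes> z = z \<otimes> x \<Longrightarrow> x \<otimes> (y \<otimes> z) = (y \<otimes> z) \<otimes> x"
proof -
  assume c: "x \<in> carrier G" "y \<in> carrier G" "z \<in> carrier G" and h: "x \<otimes> y = y \<otimes> x" "x \<otimes> z = z \<otimes> x"
  have "x \<otimes> (y \<otimes> z) = (x \<otimes> y) \<otimes> z" using c by (simp add: m_assoc)
  also have "\<dots> = y \<otimes> (x \<otimes> z)" using c h by (simp add: m_assoc)
  also have "\<dots> = (y \<otimes> z) \<otimes> x" using c h by (simp add: m_assoc)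
  finally show ?thesis .
qed
lemma gl_conj_cm: "x \<in> carrier G \<Longrightarrow> y \<in> carrier G \<Longrightarrow> x \<otimes> y = y \<otimes> x \<Longrightarrow> x \<otimes> y \<otimes> inv x = y"
  by (simp add: m_assoc)
lemma gl_braid_sq: "x \<in> carrier G \<Longrightarrow> y \<in> carrier G \<Longrightarrow> x \<otimes> y \<otimes> x = y \<otimes> x \<otimes> y \<Longrightarrow>
   inv y \<otimes> x \<otimes> x \<otimes> y = x \<otimes> y \<otimes> y \<otimes> inv x"
proof -
  assume c: "x \<in> carrier G" "y \<in> carrier G" and b: "x \<otimes> y \<otimes> x = y \<otimes> x \<otimes> y"
  have "inv y \<otimes> x \<otimes> y = inv y \<otimes> (x \<otimes> y \<otimes> x) \<otimes> inv x" using c by (simp add: m_assoc)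
  also have "\<dots> = inv y \<otimes> (y \<otimes> x \<otimes> y) \<otimes> inv x" using b by simp
  also have "\<dots> = x \<otimes> y \<otimes> inv x" using c by (simp add: m_assoc)
  finally have 1: "inv y \<otimes> x \<otimes> y = x \<otimes> y \<otimes> inv x" .
  have "inv y \<otimes> x \<otimes> x \<otimes> y = (inv y \<otimes> x \<otimes> y) \<otimes> (inv y \<otimes> x \<otimes> y)"
    using c by (simp add: m_assoc)
  also have "\<dots> = (x \<otimes> y \<otimes> inv x) \<otimes> (x \<otimes> y \<otimes> inv x)" using 1 by simp
  also have "\<dots> = x \<otimes> y \<otimes> y \<otimes> inv x" using c by (simp add: m_assoc)
  finally show ?thesis .
qed
lemma gl_braid_cm: "x \<in> carrier G \<Longrightarrow> y \<in> carrier G \<Longrightarrow> x \<otimes> y \<otimes> x = y \<otimes> x \<otimes> y \<Longrightarrow>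
   y \<otimes> (x \<otimes> y \<otimes> y \<otimes> x) = (x \<otimes> y \<otimes> y \<otimes> x) \<otimes> y"
proof -
  assume c: "x \<in> carrier G" "y \<in> carrier G" and b: "x \<otimes> y \<otimes> x = y \<otimes> x \<otimes> y"
  have "y \<otimes> (x \<otimes> y \<otimes> y \<otimes> x) = (y \<otimes> x \<otimes> y) \<otimes> (y \<otimes> x)" using c by (simp add: m_assoc)
  also have "\<dots> = (x \<otimes> y \<otimes> x) \<otimes> (y \<otimes> x)" using b by simp
  also have "\<dots> = (x \<otimes> y) \<otimes> (x \<otimes> y \<otimes> x)" using c by (simp add: m_assoc)
  also have "\<dots> = (x \<otimes> y) \<otimes> (y \<otimes> x \<otimes> y)" using b by simp
  also have "\<dots> = (x \<otimes> y \<otimes> y \<otimes> x) \<otimes> y" using c by (simp add: m_assoc)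
  finally show ?thesis .
qed
lemma gl_K3a: "s \<in> carrier G \<Longrightarrow> am \<in> carrier G \<Longrightarrow> a' \<in> carrier G \<Longrightarrow>
  s \<otimes> (am \<otimes> a') = (am \<otimes> a') \<otimes> s \<Longrightarrow> s \<otimes> am \<otimes> inv s = a' \<Longrightarrow>
  s \<otimes> a' \<otimes> inv s = inv a' \<otimes> am \<otimes> a'"
proof -
  assume c: "s \<in> carrier G" "am \<in> carrier G" "a' \<in> carrier G" and k: "s \<otimes> (am \<otimes> a') = (am \<otimes> a') \<otimes> s"
    and h: "s \<otimes> am \<otimes> inv s = a'"
  have k2: "inv s \<otimes> (am \<otimes> a') = (am \<otimes> a') \<otimes> inv s" using gl_cm_inv2[OF _ _ k] c by simp
  have "s \<otimes> a' \<otimes> inv s = s \<otimes> inv am \<otimes> ((am \<otimes> a') \<otimes> inv s)" using c by (simp add: m_assoc)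
  also have "\<dots> = s \<otimes> inv am \<otimes> inv s \<otimes> (am \<otimes> a')"
    using c k2 by (simp add: m_assoc)
  also have "s \<otimes> inv am \<otimes> inv s = inv a'" using c h[symmetric] by (simp add: inv_mult_group m_assoc)
  finally show ?thesis using c by (simp add: m_assoc)
qed
lemma gl_K3b: "s \<in> carrier G \<Longrightarrow> am \<in> carrier G \<Longrightarrow> a' \<in> carrier G \<Longrightarrow>
  s \<otimes> (am \<otimes> a') = (am \<otimes> a') \<otimes> s \<Longrightarrow> inv s \<otimes> a' \<otimes> s = am \<Longrightarrow>
  inv s \<otimes> am \<otimes> s = am \<otimes> a' \<otimes> inv am"
proof -
  assume c: "s \<in> carrier G" "am \<in> carrier G" "a' \<in> carrier G" and k: "s \<otimes> (am \<otimes> a') = (am \<otimes> a') \<otimes> s"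
    and h: "inv s \<otimes> a' \<otimes> s = am"
  have k2: "inv s \<otimes> (am \<otimes> a') = (am \<otimes> a') \<otimes> inv s" using gl_cm_inv2[OF _ _ k] c by simp
  have "inv s \<otimes> am \<otimes> s = (inv s \<otimes> (am \<otimes> a')) \<otimes> (inv a' \<otimes> s)" using c by (simp add: m_assoc)
  also have "\<dots> = (am \<otimes> a') \<otimes> (inv s \<otimes> inv a' \<otimes> s)"
    using c k2 by (simp add: m_assoc)
  also have "inv s \<otimes> inv a' \<otimes> s = inv am" using c h[symmetric] by (simp add: inv_mult_group m_assoc)
  finally show ?thesis using c by (simp add: m_assoc)
qed
end

locale braidctx =
  fixes n :: nat
  assumes n2: "2 \<le> n"

sublocale braidctx \<subseteq> G: group "braid_group n" by (rule group_G)

context braidctx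
begin

abbreviation bm (infixl "\<star>" 70) where "x \<star> y \<equiv> x \<otimes>\<^bsub>braid_group n\<^esub> y"
abbreviation iv where "iv x \<equiv> inv\<^bsub>braid_group n\<^esub> x"
abbreviation e where "e \<equiv> \<one>\<^bsub>braid_group n\<^esub>"
abbreviation C where "C \<equiv> carrier (braid_group n)"

definition s :: "nat \<Rightarrow> bword set" where "s i = sigma n i"

lemma s_cls: "s i = cls n [(i, True)]"
  by (simp add: s_def sigma_def cls_def)

lemma s_carr[simp]: "1 \<le> i \<Longrightarrow> i < n \<Longrightarrow> s i \<in> C"
  by (simp add: s_cls)

lemma s_inv_cls: "1 \<le> i \<Longrightarrow> i < n \<Longrightarrow> iv (s i) = cls n [(i, False)]"
  by (simp add: s_cls inv_cls)

lemma rel_step: "braid_step n x y \<Longrightarrow> (x, y) \<in> braid_rel n"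
  using step_valid by (auto simp: rel_iff)

lemma s_comm: "1 \<le> i \<Longrightarrow> Suc i < j \<Longrightarrow> j < n \<Longrightarrow> s i \<star> s j = s j \<star> s i"
proof -
  assume h: "1 \<le> i" "Suc i < j" "j < n"
  have "braid_step n ([] @ [(i, True), (j, True)] @ []) ([] @ [(j, True), (i, True)] @ [])"
    using h by (intro braid_step.comm) auto
  then have "cls n [(i, True), (j, True)] = cls n [(j, True), (i, True)]"
    by (simp add: cls_eq rel_step)
  then show ?thesis using h by (simp add: s_cls mult_cls)
qed

lemma s_braid: "1 \<le> i \<Longrightarrow> Suc i < n \<Longrightarrow> s i \<star> s (Suc i) \<star> s i = s (Suc i) \<star> s i \<star> s (Suc i)"
proof -
  assume h: "1 \<le> i" "Suc i < n"
  have "braid_step n ([] @ [(i, True), (Suc i, True), (i, True)] @ [])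
     ([] @ [(Suc i, True), (i, True), (Suc i, True)] @ [])"
    using h by (intro braid_step.braid) auto
  then have "cls n [(i, True), (Suc i, True), (i, True)] = cls n [(Suc i, True), (i, True), (Suc i, True)]"
    by (simp add: cls_eq rel_step)
  then show ?thesis using h by (simp add: s_cls mult_cls)
qed

primrec W :: "nat \<Rightarrow> bword set" where
  "W 0 = e"
| "W (Suc j) = (if j = 0 then e else W j \<star> s j)"

lemma W_carr[simp]: "i \<le> n \<Longrightarrow> W i \<in> C"
  by (induction i) auto

lemma W1[simp]: "W 1 = e" by simp

lemma W_Suc: "1 \<le> j \<Longrightarrow> W (Suc j) = W j \<star> s j" by simp

lemma cls_map: "i \<le> n \<Longrightarrow> cls n (map (\<lambda>j. (j, True)) [1..<i]) = W i"
proof (induction i)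
  case 0 then show ?case by (simp add: one_cls)
next
  case (Suc i)
  show ?case
  proof (cases "i = 0")
    case True then show ?thesis by (simp add: one_cls)
  next
    case False
    then have "[1..<Suc i] = [1..<i] @ [i]" by simp
    moreover have "valid_word n (map (\<lambda>j. (j, True)) [1..<i])"
      using Suc by (auto simp: valid_word_def)
    ultimately show ?thesis using Suc False by (simp add: mult_cls[symmetric] s_cls)
  qed
qed

definition a :: "nat \<Rightarrow> bword set" where "a i = a_elem n i"

lemma a_eq: "1 \<le> i \<Longrightarrow> i < n \<Longrightarrow> a i = W i \<star> s i \<star> s i \<star> iv (W i)"
proof -
  assume h: "1 \<le> i" "i < n"
  define U where "U = map (\<lambda>j. (j, True)) [1..<i]"
  have vU: "valid_word n U" using h by (auto simp: valid_word_def U_def)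
  have w: "a_word i = U @ [(i, True)] @ [(i, True)] @ winv U"
    by (simp add: a_word_def U_def winv_def rev_map o_def)
  have "a i = cls n U \<star> s i \<star> s i \<star> cls n (winv U)"
    using vU h by (simp add: a_def a_elem_def w s_cls mult_cls cls_def[symmetric])
  moreover have "cls n U = W i" using cls_map[of i] h by (simp add: U_def)
  ultimately show ?thesis using vU h by (simp add: inv_cls[symmetric])
qed

lemma a_carr[simp]: "1 \<le> i \<Longrightarrow> i < n \<Longrightarrow> a i \<in> C"
  by (simp add: a_eq)

definition p :: "bword set \<Rightarrow> nat \<Rightarrow> nat" where "p x = braid_perm x"

lemma p_mult: "x \<in> C \<Longrightarrow> y \<in> C \<Longrightarrow> p (x \<star> y) = p x \<circ> p y"
  unfolding carrier_G p_def by (auto simp: mult_cls braid_perm_cls word_perm_append)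

lemma p_one[simp]: "p e = id"
  by (simp add: one_cls p_def braid_perm_cls)

lemma p_s[simp]: "1 \<le> i \<Longrightarrow> i < n \<Longrightarrow> p (s i) = Transposition.transpose i (Suc i)"
  by (simp add: s_cls p_def braid_perm_cls)

lemma p_inv: "x \<in> C \<Longrightarrow> p (iv x) \<circ> p x = id \<and> p x \<circ> p (iv x) = id"
  by (metis G.inv_closed G.l_inv G.r_inv p_mult p_one)

lemma p_inv_s[simp]: "1 \<le> i \<Longrightarrow> i < n \<Longrightarrow> p (iv (s i)) = Transposition.transpose i (Suc i)"
  by (simp add: s_inv_cls p_def braid_perm_cls)


lemma s_comm_ctx: "1 \<le> i \<Longrightarrow> Suc i < j \<Longrightarrow> j < n \<Longrightarrow> z \<in> C \<Longrightarrow> s i \<star> (s j \<star> z) = s j \<star> (s i \<star> z)"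
  by (rule G.gl_ctx[OF s_comm]) simp_all

lemma W_comm: "i < m \<Longrightarrow> m < n \<Longrightarrow> s m \<star> W i = W i \<star> s m"
proof (induction i)
  case 0 then show ?case by simp
next
  case (Suc i)
  show ?case
  proof (cases "i = 0")
    case True then show ?thesis using Suc by simp
  next
    case False
    have ih: "s m \<star> W i = W i \<star> s m" using Suc by simp
    have "s m \<star> W (Suc i) = (s m \<star> W i) \<star> s i" using False Suc.prems by (simp add: G.m_assoc)
    also have "\<dots> = (W i \<star> s m) \<star> s i" using ih by simp
    also have "\<dots> = W i \<star> (s m \<star> s i)" using False Suc by (simp add: G.m_assoc)
    also have "s m \<star> s i = s i \<star> s m" using False Suc s_comm[of i m] by simp
    finally show ?thesis using False Suc by (simp add: G.m_assoc)
  qed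
qed

lemma W_shift: "2 \<le> m \<Longrightarrow> m < i \<Longrightarrow> i \<le> n \<Longrightarrow> s m \<star> W i = W i \<star> s (m - 1)"
proof (induction i)
  case 0 then show ?case by simp
next
  case (Suc i)
  show ?case
  proof (cases "i = m")
    case True
    have Wm: "W m = W (m - 1) \<star> s (m - 1)" using Suc W_Suc[of "m - 1"] by simp
    have c1: "s m \<star> W (m - 1) = W (m - 1) \<star> s m" using Suc True by (intro W_comm) auto
    have br: "s (m - 1) \<star> s m \<star> s (m - 1) = s m \<star> s (m - 1) \<star> s m"
      using s_braid[of "m - 1"] Suc True by simp
    have "s m \<star> W (Suc i) = (s m \<star> W (m - 1)) \<star> s (m - 1) \<star> s m"
      using True Suc Wm by (simp add: G.m_assoc)
    also have "\<dots> = W (m - 1) \<star> (s m \<star> s (m - 1) \<star> s m)" using c1 Suc True by (simp add: G.m_assoc)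
    also have "\<dots> = W (m - 1) \<star> (s (m - 1) \<star> s m \<star> s (m - 1))" using br by simp
    also have "\<dots> = W (Suc i) \<star> s (m - 1)" using True Suc Wm by (simp add: G.m_assoc)
    finally show ?thesis .
  next
    case False
    then have mi: "m < i" using Suc by simp
    have ih: "s m \<star> W i = W i \<star> s (m - 1)" using Suc mi by simp
    have "s m \<star> W (Suc i) = (s m \<star> W i) \<star> s i" using mi Suc.prems by (simp add: G.m_assoc)
    also have "\<dots> = (W i \<star> s (m - 1)) \<star> s i" using ih by simp
    also have "\<dots> = W i \<star> (s (m - 1) \<star> s i)" using mi Suc by (simp add: G.m_assoc)
    also have "s (m - 1) \<star> s i = s i \<star> s (m - 1)" using mi Suc s_comm[of "m - 1" i] by simp
    finally show ?thesis using mi Suc by (simp add: G.m_assoc)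
  qed
qed

lemma K1a: "Suc i < m \<Longrightarrow> m < n \<Longrightarrow> 1 \<le> i \<Longrightarrow> s m \<star> a i = a i \<star> s m"
proof -
  assume h: "Suc i < m" "m < n" "1 \<le> i"
  have c1: "s m \<star> W i = W i \<star> s m" using h by (intro W_comm) auto
  have c2: "s m \<star> s i = s i \<star> s m" using h s_comm[of i m] by simp
  have c3: "s m \<star> iv (W i) = iv (W i) \<star> s m" using h c1 by (intro G.gl_cm_inv) auto
  have "s m \<star> (W i \<star> (s i \<star> (s i \<star> iv (W i)))) = (W i \<star> (s i \<star> (s i \<star> iv (W i)))) \<star> s m"
    using h c1 c2 c3 by (intro G.gl_cm_mult) (auto intro!: G.gl_cm_mult)
  then show ?thesis using h by (simp add: a_eq G.m_assoc)
qed

lemma K1b: "2 \<le> m \<Longrightarrow> m < i \<Longrightarrow> i < n \<Longrightarrow> s m \<star> a i = a i \<star> s m"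
proof -
  assume h: "2 \<le> m" "m < i" "i < n"
  define k where "k = m - 1"
  define w where "w = W i"
  define x where "x = s i"
  define y where "y = s m"
  define z where "z = s k"
  have c: "w \<in> C" "x \<in> C" "y \<in> C" "z \<in> C" using h by (auto simp: w_def x_def y_def z_def k_def)
  have e1: "y \<star> w = w \<star> z" using h W_shift[of m i] by (simp add: w_def y_def z_def k_def)
  have e2: "z \<star> iv w = iv w \<star> y" using c e1 by (intro G.gl_swap_inv) auto
  have e3: "z \<star> x = x \<star> z" using h s_comm[of "m - 1" i] by (simp add: x_def z_def k_def)
  have e1c: "\<And>u. u \<in> C \<Longrightarrow> y \<star> (w \<star> u) = w \<star> (z \<star> u)"
    using c e1 by (intro G.gl_ctx) auto
  have e3c: "\<And>u. u \<in> C \<Longrightarrow> z \<star> (x \<star> u) = x \<star> (z \<star> u)"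
    using c e3 by (intro G.gl_ctx) auto
  have "a i = w \<star> x \<star> x \<star> iv w" using h a_eq[of i] by (simp add: w_def x_def)
  then show ?thesis using c by (simp add: y_def[symmetric] G.m_assoc e1c e3c e2)
qed

lemma K1: "2 \<le> m \<Longrightarrow> m < n \<Longrightarrow> 1 \<le> i \<Longrightarrow> i < n \<Longrightarrow> i \<noteq> m - 1 \<Longrightarrow> i \<noteq> m \<Longrightarrow>
  s m \<star> a i = a i \<star> s m"
proof (cases "i < m")
  case True
  assume "2 \<le> m" "m < n" "1 \<le> i" "i < n" "i \<noteq> m - 1" "i \<noteq> m"
  then show ?thesis using True K1a[of i m] by simp
next
  case False
  assume "2 \<le> m" "m < n" "1 \<le> i" "i < n" "i \<noteq> m - 1" "i \<noteq> m"
  then show ?thesis using False K1b[of m i] by simp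
qed

lemma K2: "2 \<le> m \<Longrightarrow> m < n \<Longrightarrow> iv (s m) \<star> a (m - 1) \<star> s m = a m"
proof -
  assume h: "2 \<le> m" "m < n"
  define W' where "W' = W (m - 1)"
  define x where "x = s (m - 1)"
  define y where "y = s m"
  have cW: "W' \<in> C" "x \<in> C" "y \<in> C" using h by (auto simp: W'_def x_def y_def)
  have c1: "y \<star> W' = W' \<star> y" using h unfolding W'_def y_def by (intro W_comm) auto
  have c1a: "\<And>z. z \<in> C \<Longrightarrow> iv y \<star> (W' \<star> z) = W' \<star> (iv y \<star> z)"
    using cW G.gl_cm_inv2[OF _ _ c1] by (intro G.gl_ctx) auto
  have c1b: "iv W' \<star> y = y \<star> iv W'"
    using cW G.gl_cm_inv[OF _ _ c1] by simp
  have br: "x \<star> y \<star> x = y \<star> x \<star> y"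
    using s_braid[of "m - 1"] h by (simp add: x_def y_def)
  have bs: "\<And>z. z \<in> C \<Longrightarrow> iv y \<star> (x \<star> (x \<star> (y \<star> z))) = x \<star> (y \<star> (y \<star> (iv x \<star> z)))"
  proof -
    fix z assume z: "z \<in> C"
    have "iv y \<star> x \<star> x \<star> y = x \<star> y \<star> y \<star> iv x" using G.gl_braid_sq[OF _ _ br] cW by simp
    then have "iv y \<star> x \<star> x \<star> y \<star> z = x \<star> y \<star> y \<star> iv x \<star> z" by simp
    then show "iv y \<star> (x \<star> (x \<star> (y \<star> z))) = x \<star> (y \<star> (y \<star> (iv x \<star> z)))"
      using cW z by (simp add: G.m_assoc)
  qed
  have am1: "a (m - 1) = W' \<star> x \<star> x \<star> iv W'" using h a_eq[of "m - 1"] by (simp add: W'_def x_def)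
  have am: "a m = W' \<star> x \<star> y \<star> y \<star> iv x \<star> iv W'"
  proof -
    have "W m = W' \<star> x" using h W_Suc[of "m - 1"] by (simp add: W'_def x_def)
    then show ?thesis using h cW a_eq[of m] by (simp add: y_def G.inv_mult_group G.m_assoc)
  qed
  have "iv y \<star> a (m - 1) \<star> y = W' \<star> (x \<star> (y \<star> (y \<star> (iv x \<star> iv W'))))"
    using cW unfolding am1 by (simp add: G.m_assoc c1a c1b bs)
  also have "\<dots> = a m" using cW by (simp add: am G.m_assoc)
  finally show ?thesis by (simp add: y_def)
qed

lemma K3: "2 \<le> m \<Longrightarrow> m < n \<Longrightarrow> s m \<star> (a m \<star> a (m - 1)) = (a m \<star> a (m - 1)) \<star> s m"
proof -
  assume h: "2 \<le> m" "m < n"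
  define W' where "W' = W (m - 1)"
  define x where "x = s (m - 1)"
  define y where "y = s m"
  have cW: "W' \<in> C" "x \<in> C" "y \<in> C" using h by (auto simp: W'_def x_def y_def)
  have c1: "y \<star> W' = W' \<star> y" using h unfolding W'_def y_def by (intro W_comm) auto
  have c1b: "y \<star> iv W' = iv W' \<star> y"
    using cW G.gl_cm_inv[OF _ _ c1] by simp
  have br: "x \<star> y \<star> x = y \<star> x \<star> y"
    using s_braid[of "m - 1"] h by (simp add: x_def y_def)
  have c2: "y \<star> (x \<star> y \<star> y \<star> x) = (x \<star> y \<star> y \<star> x) \<star> y" using G.gl_braid_cm[OF _ _ br] cW by simp
  have am1: "a (m - 1) = W' \<star> x \<star> x \<star> iv W'" using h a_eq[of "m - 1"] by (simp add: W'_def x_def)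
  have am: "a m = W' \<star> x \<star> y \<star> y \<star> iv x \<star> iv W'"
  proof -
    have "W m = W' \<star> x" using h W_Suc[of "m - 1"] by (simp add: W'_def x_def)
    then show ?thesis using h cW a_eq[of m] by (simp add: y_def G.inv_mult_group G.m_assoc)
  qed
  have "a m \<star> a (m - 1) = W' \<star> ((x \<star> y \<star> y \<star> x) \<star> iv W')"
    using cW unfolding am am1 by (simp add: G.m_assoc)
  moreover have "y \<star> (W' \<star> ((x \<star> y \<star> y \<star> x) \<star> iv W')) = (W' \<star> ((x \<star> y \<star> y \<star> x) \<star> iv W')) \<star> y"
  proof -
    have d1: "y \<star> ((x \<star> y \<star> y \<star> x) \<star> iv W') = ((x \<star> y \<star> y \<star> x) \<star> iv W') \<star> y"
      by (rule G.gl_cm_mult[OF _ _ _ c2 c1b]) (use cW in simp_all)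
    show ?thesis by (rule G.gl_cm_mult[OF _ _ _ c1 d1]) (use cW in simp_all)
  qed
  ultimately show ?thesis by (simp add: y_def)
qed


lemma D_all:
  assumes k: "1 \<le> k" "Suc k < n"
  shows "s (Suc k) \<star> a (Suc k) \<star> iv (s (Suc k)) = a k"
    and "s (Suc k) \<star> a k \<star> iv (s (Suc k)) = iv (a k) \<star> a (Suc k) \<star> a k"
    and "iv (s (Suc k)) \<star> a k \<star> s (Suc k) = a (Suc k)"
    and "iv (s (Suc k)) \<star> a (Suc k) \<star> s (Suc k) = a (Suc k) \<star> a k \<star> iv (a (Suc k))"
proof -
  have c: "s (Suc k) \<in> C" "a k \<in> C" "a (Suc k) \<in> C" using k by auto
  have k2: "iv (s (Suc k)) \<star> a k \<star> s (Suc k) = a (Suc k)" using K2[of "Suc k"] k by simp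
  have k3: "s (Suc k) \<star> (a (Suc k) \<star> a k) = (a (Suc k) \<star> a k) \<star> s (Suc k)" using K3[of "Suc k"] k by simp
  have d1: "s (Suc k) \<star> a (Suc k) \<star> iv (s (Suc k)) = a k"
    using c by (simp add: k2[symmetric] G.m_assoc)
  show "s (Suc k) \<star> a (Suc k) \<star> iv (s (Suc k)) = a k" by (rule d1)
  show "iv (s (Suc k)) \<star> a k \<star> s (Suc k) = a (Suc k)" by (rule k2)
  show "s (Suc k) \<star> a k \<star> iv (s (Suc k)) = iv (a k) \<star> a (Suc k) \<star> a k"
    using G.gl_K3a[OF c(1) c(3) c(2) k3 d1] .
  show "iv (s (Suc k)) \<star> a (Suc k) \<star> s (Suc k) = a (Suc k) \<star> a k \<star> iv (a (Suc k))"
    using G.gl_K3b[OF c(1) c(3) c(2) k3 k2] .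
qed

lemma D5: "2 \<le> m \<Longrightarrow> m < n \<Longrightarrow> 1 \<le> i \<Longrightarrow> i < n \<Longrightarrow> i \<noteq> m - 1 \<Longrightarrow> i \<noteq> m \<Longrightarrow>
  s m \<star> a i \<star> iv (s m) = a i \<and> iv (s m) \<star> a i \<star> iv (iv (s m)) = a i"
proof -
  assume h: "2 \<le> m" "m < n" "1 \<le> i" "i < n" "i \<noteq> m - 1" "i \<noteq> m"
  have c: "s m \<star> a i = a i \<star> s m" by (rule K1[OF h])
  have c': "iv (s m) \<star> a i = a i \<star> iv (s m)" using G.gl_cm_inv2[OF _ _ c] h by simp
  show ?thesis using h G.gl_conj_cm[OF _ _ c] G.gl_conj_cm[OF _ _ c'] by simp
qed

definition AA where "AA = combed n"
definition BB where "BB = generate (braid_group n) {s m | m. 2 \<le> m \<and> m < n}"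

lemma AA_gens: "{a_elem n i | i. 1 \<le> i \<and> i \<le> n - 1} = {a i | i. 1 \<le> i \<and> i < n}"
proof -
  have "\<And>i. (1 \<le> i \<and> i \<le> n - 1) = (1 \<le> i \<and> i < n)" using n2 by linarith
  then show ?thesis by (simp only: a_def)
qed

lemma AA_def2: "AA = generate (braid_group n) {a i | i. 1 \<le> i \<and> i < n}"
  unfolding AA_def combed_def AA_gens by (rule refl)

lemma AA_gens_C: "{a i | i. 1 \<le> i \<and> i < n} \<subseteq> C"
  by (auto simp del: a_carr intro: a_carr)

lemma BB_gens_C: "{s m | m. 2 \<le> m \<and> m < n} \<subseteq> C"
  by (auto simp del: s_carr intro: s_carr)

lemma AA_sub: "subgroup AA (braid_group n)"
  unfolding AA_def2 by (rule G.generate_is_subgroup[OF AA_gens_C])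

lemma BB_sub: "subgroup BB (braid_group n)"
  unfolding BB_def by (rule G.generate_is_subgroup[OF BB_gens_C])

lemma a_AA[simp]: "1 \<le> i \<Longrightarrow> i < n \<Longrightarrow> a i \<in> AA"
  unfolding AA_def2 by (rule generate.incl, rule CollectI, rule exI[of _ i]) simp

lemma AA_C: "x \<in> AA \<Longrightarrow> x \<in> C" by (rule subsetD[OF subgroup.subset[OF AA_sub]])
lemma BB_C: "x \<in> BB \<Longrightarrow> x \<in> C" by (rule subsetD[OF subgroup.subset[OF BB_sub]])
lemma AA_mult[simp]: "x \<in> AA \<Longrightarrow> y \<in> AA \<Longrightarrow> x \<star> y \<in> AA" by (rule subgroup.m_closed[OF AA_sub])
lemma AA_inv[simp]: "x \<in> AA \<Longrightarrow> iv x \<in> AA" by (rule subgroup.m_inv_closed[OF AA_sub])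
lemma AA_one[simp]: "e \<in> AA" by (rule subgroup.one_closed[OF AA_sub])
lemma BB_mult[simp]: "x \<in> BB \<Longrightarrow> y \<in> BB \<Longrightarrow> x \<star> y \<in> BB" by (rule subgroup.m_closed[OF BB_sub])
lemma BB_inv[simp]: "x \<in> BB \<Longrightarrow> iv x \<in> BB" by (rule subgroup.m_inv_closed[OF BB_sub])
lemma BB_one[simp]: "e \<in> BB" by (rule subgroup.one_closed[OF BB_sub])
lemma s_BB[simp]: "2 \<le> m \<Longrightarrow> m < n \<Longrightarrow> s m \<in> BB"
  unfolding BB_def by (rule generate.incl, rule CollectI, rule exI[of _ m]) simp

lemma gen_conj:
  assumes m: "2 \<le> m" "m < n" and g: "g = s m \<or> g = iv (s m)" and i: "1 \<le> i" "i < n"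
  shows "\<exists>Q\<in>AA. g \<star> a i \<star> iv g = Q \<star> a (Transposition.transpose m (Suc m) (Suc i) - 1) \<star> iv Q"
proof -
  obtain k where k: "m = Suc k" "1 \<le> k" "Suc k < n" using m by (cases m) auto
  have cs: "s m \<in> C" using m by simp
  have ivg: "g = iv (s m) \<Longrightarrow> iv g = s m" using cs by simp
  show ?thesis
  proof (cases "i = m")
    case True
    then have idx: "Transposition.transpose m (Suc m) (Suc i) - 1 = k" using k by simp
    show ?thesis
    proof (cases "g = s m")
      case True
      then show ?thesis using D_all(1)[OF k(2,3)] `i = m` k idx
        by (intro bexI[of _ e]) simp_all
    next
      case False
      then have "g = iv (s m)" using g by simp
      then show ?thesis using D_all(4)[OF k(2,3)] `i = m` k idx ivg
        by (intro bexI[of _ "a (Suc k)"]) simp_all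
    qed
  next
    case ne: False
    show ?thesis
    proof (cases "i = k")
      case True
      then have idx: "Transposition.transpose m (Suc m) (Suc i) - 1 = Suc k" using k by simp
      show ?thesis
      proof (cases "g = s m")
        case True
        then show ?thesis using D_all(2)[OF k(2,3)] `i = k` k idx
          by (intro bexI[of _ "iv (a k)"]) simp_all
      next
        case False
        then have "g = iv (s m)" using g by simp
        then show ?thesis using D_all(3)[OF k(2,3)] `i = k` k idx ivg
          by (intro bexI[of _ e]) simp_all
      qed
    next
      case False
      then have idx: "Transposition.transpose m (Suc m) (Suc i) - 1 = i" using k ne by simp
      have d5: "s m \<star> a i \<star> iv (s m) = a i \<and> iv (s m) \<star> a i \<star> iv (iv (s m)) = a i"
        using D5[OF m i] ne False k by simp
      have "g \<star> a i \<star> iv g = a i" using d5 g by (elim disjE) simp_all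
      then show ?thesis using idx i by (intro bexI[of _ e]) simp_all
    qed
  qed
qed


lemma idx_range: "2 \<le> m \<Longrightarrow> m < n \<Longrightarrow> 1 \<le> i \<Longrightarrow> i < n \<Longrightarrow>
  1 \<le> Transposition.transpose m (Suc m) (Suc i) - 1 \<and> Transposition.transpose m (Suc m) (Suc i) - 1 < n"
  by (auto simp: Transposition.transpose_def)

lemma gen_conj_AA: "2 \<le> m \<Longrightarrow> m < n \<Longrightarrow> g = s m \<or> g = iv (s m) \<Longrightarrow> 1 \<le> i \<Longrightarrow> i < n \<Longrightarrow>
  g \<star> a i \<star> iv g \<in> AA"
proof -
  assume h: "2 \<le> m" "m < n" "g = s m \<or> g = iv (s m)" "1 \<le> i" "i < n"
  obtain Q where Q: "Q \<in> AA" "g \<star> a i \<star> iv g = Q \<star> a (Transposition.transpose m (Suc m) (Suc i) - 1) \<star> iv Q"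
    using gen_conj[OF h] by blast
  have "a (Transposition.transpose m (Suc m) (Suc i) - 1) \<in> AA" using idx_range[OF h(1,2,4,5)] by simp
  then show ?thesis using Q by simp
qed

lemma g_carr: "2 \<le> m \<Longrightarrow> m < n \<Longrightarrow> g = s m \<or> g = iv (s m) \<Longrightarrow> g \<in> C"
  by auto

lemma gen_norm:
  assumes m: "2 \<le> m" "m < n" "g = s m \<or> g = iv (s m)" and P: "P \<in> AA"
  shows "g \<star> P \<star> iv g \<in> AA"
proof -
  have gC: "g \<in> C" using g_carr[OF m] .
  have "P \<in> generate (braid_group n) {a i | i. 1 \<le> i \<and> i < n}" using P AA_def2 by simp
  then show ?thesis
  proof (induction rule: generate.induct)
    case one
    then show ?case using gC by simp
  next
    case (incl h)
    then obtain i where "h = a i" "1 \<le> i" "i < n" by blast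
    then show ?case using gen_conj_AA[OF m] by simp
  next
    case (inv h)
    then obtain i where i: "h = a i" "1 \<le> i" "i < n" by blast
    then have "iv (g \<star> h \<star> iv g) \<in> AA" using gen_conj_AA[OF m] by simp
    then show ?case using G.gl_conj_inv[OF gC, of h] i gC by simp
  next
    case (eng h1 h2)
    have c: "h1 \<in> C" "h2 \<in> C" using eng.hyps AA_def2 AA_C by auto
    show ?case using G.gl_conj_split[OF gC c] eng.IH by simp
  qed
qed

lemma BB_norm: "\<beta> \<in> BB \<Longrightarrow> P \<in> AA \<Longrightarrow> \<beta> \<star> P \<star> iv \<beta> \<in> AA"
proof -
  assume b: "\<beta> \<in> BB" and P: "P \<in> AA"
  have "\<beta> \<in> generate (braid_group n) {s m | m. 2 \<le> m \<and> m < n}" using b BB_def by simp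
  then show ?thesis using P
  proof (induction arbitrary: P rule: generate.induct)
    case one
    then show ?case using AA_C by simp
  next
    case (incl h)
    then obtain m where "h = s m" "2 \<le> m" "m < n" by blast
    then show ?case using gen_norm[of m h P] incl by simp
  next
    case (inv h)
    then obtain m where m: "h = s m" "2 \<le> m" "m < n" by blast
    then show ?case using gen_norm[of m "iv h" P] inv by simp
  next
    case (eng h1 h2)
    have c: "h1 \<in> C" "h2 \<in> C" using eng.hyps BB_def BB_C by auto
    have "h2 \<star> P \<star> iv h2 \<in> AA" using eng by simp
    then have "h1 \<star> (h2 \<star> P \<star> iv h2) \<star> iv h1 \<in> AA" using eng by simp
    then show ?case using G.gl_conj_mult[OF c AA_C[OF eng.prems]] by simp
  qed
qed

lemma p_a: "1 \<le> i \<Longrightarrow> i < n \<Longrightarrow> p (a i) = id"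
proof -
  assume h: "1 \<le> i" "i < n"
  have c: "W i \<in> C" "s i \<in> C" using h by auto
  have "a i = W i \<star> (s i \<star> s i) \<star> iv (W i)" using h by (simp add: a_eq G.m_assoc)
  then have "p (a i) = p (W i) \<circ> (p (s i) \<circ> p (s i)) \<circ> p (iv (W i))" using c by (simp add: p_mult)
  also have "\<dots> = p (W i) \<circ> p (iv (W i))" using h by simp
  also have "\<dots> = id" using p_inv[OF c(1)] by simp
  finally show ?thesis .
qed

lemma p_AA: "P \<in> AA \<Longrightarrow> p P = id"
proof -
  assume "P \<in> AA"
  then have "P \<in> generate (braid_group n) {a i | i. 1 \<le> i \<and> i < n}" using AA_def2 by simp
  then show ?thesis
  proof (induction rule: generate.induct)
    case one then show ?case by simp
  next
    case (incl h) then show ?case using p_a by blast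
  next
    case (inv h)
    then obtain i where i: "h = a i" "1 \<le> i" "i < n" by blast
    then show ?case using p_inv[of h] p_a by simp
  next
    case (eng h1 h2)
    have c: "h1 \<in> C" "h2 \<in> C" using eng.hyps AA_def2 AA_C by auto
    show ?case using c eng.IH by (simp add: p_mult)
  qed
qed

lemma BB_conj: "\<beta> \<in> BB \<Longrightarrow> p \<beta> 1 = 1 \<and> (\<forall>x. 2 \<le> x \<and> x \<le> n \<longrightarrow> 2 \<le> p \<beta> x \<and> p \<beta> x \<le> n) \<and>
   (\<forall>i. 1 \<le> i \<and> i < n \<longrightarrow> (\<exists>Q\<in>AA. \<beta> \<star> a i \<star> iv \<beta> = Q \<star> a (p \<beta> (Suc i) - 1) \<star> iv Q))"
proof -
  assume b: "\<beta> \<in> BB"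
  have gen: "p g = Transposition.transpose m (Suc m) \<and> p g 1 = 1 \<and> (\<forall>x. 2 \<le> x \<and> x \<le> n \<longrightarrow> 2 \<le> p g x \<and> p g x \<le> n) \<and>
   (\<forall>i. 1 \<le> i \<and> i < n \<longrightarrow> (\<exists>Q\<in>AA. g \<star> a i \<star> iv g = Q \<star> a (p g (Suc i) - 1) \<star> iv Q))"
    if m: "2 \<le> m" "m < n" "g = s m \<or> g = iv (s m)" for g m
  proof -
    have pg: "p g = Transposition.transpose m (Suc m)" using m by auto
    show ?thesis using pg m gen_conj[OF m] by (auto simp: Transposition.transpose_def)
  qed
  have "\<beta> \<in> generate (braid_group n) {s m | m. 2 \<le> m \<and> m < n}" using b BB_def by simp
  then show ?thesis
  proof (induction rule: generate.induct)
    case one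
    show ?case by (auto intro: bexI[of _ e])
  next
    case (incl h)
    then obtain m where "h = s m" "2 \<le> m" "m < n" by blast
    then show ?case using gen[of m h] by blast
  next
    case (inv h)
    then obtain m where "h = s m" "2 \<le> m" "m < n" by blast
    then show ?case using gen[of m "iv h"] by blast
  next
    case (eng b c)
    have cC: "b \<in> C" "c \<in> C" using eng.hyps BB_def BB_C by auto
    have pbc: "p (b \<star> c) = p b \<circ> p c" using cC by (simp add: p_mult)
    have r1: "p (b \<star> c) 1 = 1" using eng.IH pbc by simp
    have r2: "\<forall>x. 2 \<le> x \<and> x \<le> n \<longrightarrow> 2 \<le> p (b \<star> c) x \<and> p (b \<star> c) x \<le> n" using eng.IH pbc by simp
    have r3: "\<exists>Q\<in>AA. b \<star> c \<star> a i \<star> iv (b \<star> c) = Q \<star> a (p (b \<star> c) (Suc i) - 1) \<star> iv Q"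
      if i: "1 \<le> i" "i < n" for i
    proof -
      obtain Q2 where Q2: "Q2 \<in> AA" "c \<star> a i \<star> iv c = Q2 \<star> a (p c (Suc i) - 1) \<star> iv Q2"
        using eng.IH(2) i by blast
      define j where "j = p c (Suc i) - 1"
      have pr: "2 \<le> p c (Suc i) \<and> p c (Suc i) \<le> n" using eng.IH(2) i by simp
      have j: "1 \<le> j" "j < n" "Suc j = p c (Suc i)" using pr by (auto simp: j_def)
      obtain Q1 where Q1: "Q1 \<in> AA" "b \<star> a j \<star> iv b = Q1 \<star> a (p b (Suc j) - 1) \<star> iv Q1"
        using eng.IH(1) j by blast
      define Q' where "Q' = b \<star> Q2 \<star> iv b"
      have Q': "Q' \<in> AA" using BB_norm[OF _ Q2(1)] eng.hyps(1) BB_def by (simp add: Q'_def)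
      have cQ: "Q1 \<in> C" "Q2 \<in> C" "Q' \<in> C" "a j \<in> C" using Q1 Q2 Q' AA_C j by auto
      have "b \<star> c \<star> a i \<star> iv (b \<star> c) = b \<star> (c \<star> a i \<star> iv c) \<star> iv b"
        using G.gl_conj_mult[OF cC] i by simp
      also have "\<dots> = b \<star> (Q2 \<star> a j \<star> iv Q2) \<star> iv b" using Q2 by (simp add: j_def)
      also have "\<dots> = Q' \<star> (b \<star> a j \<star> iv b) \<star> iv Q'"
        using G.gl_conj_prod[OF cC(1) cQ(2) cQ(4)] by (simp add: Q'_def)
      also have "\<dots> = Q' \<star> (Q1 \<star> a (p b (Suc j) - 1) \<star> iv Q1) \<star> iv Q'" using Q1 by simp
      also have "\<dots> = (Q' \<star> Q1) \<star> a (p b (Suc j) - 1) \<star> iv (Q' \<star> Q1)"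
      proof -
        have pr2: "2 \<le> p b (Suc j) \<and> p b (Suc j) \<le> n" using eng.IH(1) j by simp
        have "1 \<le> p b (Suc j) - 1" "p b (Suc j) - 1 < n" using pr2 by auto
        then have "a (p b (Suc j) - 1) \<in> C" by simp
        then show ?thesis using G.gl_conj_mult[OF cQ(3) cQ(1)] by simp
      qed
      finally show ?thesis using Q' Q1 j pbc by (intro bexI[of _ "Q' \<star> Q1"]) simp_all
    qed
    show ?case using r1 r2 r3 by blast
  qed
qed


lemma p_W: "1 \<le> j \<Longrightarrow> j \<le> n \<Longrightarrow> p (W j) j = 1 \<and> (\<forall>x. j < x \<longrightarrow> p (W j) x = x)"
proof (induction j)
  case 0 then show ?case by simp
next
  case (Suc j)
  show ?case
  proof (cases "j = 0")
    case True then show ?thesis by simp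
  next
    case False
    have pw: "p (W j \<star> s j) = p (W j) \<circ> Transposition.transpose j (Suc j)"
      using False Suc.prems by (simp add: p_mult)
    have ih: "p (W j) j = 1 \<and> (\<forall>x. j < x \<longrightarrow> p (W j) x = x)" using Suc False by simp
    show ?thesis using ih False by (simp add: pw)
  qed
qed

lemma p_range: "valid_word n w \<Longrightarrow> 1 \<le> x \<Longrightarrow> x \<le> n \<Longrightarrow> 1 \<le> word_perm w x \<and> word_perm w x \<le> n"
proof (induction w)
  case Nil then show ?case by simp
next
  case (Cons l w)
  obtain i b where l: "l = (i, b)" by (cases l)
  have "1 \<le> i" "i < n" using Cons.prems l by auto
  then show ?case using Cons l by (auto simp: Transposition.transpose_def)
qed

lemma letter:
  assumes i: "1 \<le> i" "i < n" and g: "g = s i \<or> g = iv (s i)" and j: "1 \<le> j" "j \<le> n"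
  shows "\<exists>P\<in>AA. \<exists>\<beta>\<in>BB. g \<star> iv (W j) = iv (W (Transposition.transpose i (Suc i) j)) \<star> P \<star> \<beta>"
proof -
  have cs: "s i \<in> C" "W j \<in> C" "g \<in> C" using i j g by auto
  show ?thesis
  proof (cases "j < i")
    case True
    have t: "Transposition.transpose i (Suc i) j = j" using True by simp
    have c1: "s i \<star> W j = W j \<star> s i" using True i by (intro W_comm) auto
    have c2: "g \<star> W j = W j \<star> g" using g c1 G.gl_cm_inv2[OF cs(1,2) c1] by (elim disjE) simp_all
    have c3: "g \<star> iv (W j) = iv (W j) \<star> g" using G.gl_cm_inv[OF cs(3,2) c2] .
    have "g \<in> BB" using g True j i by (elim disjE) simp_all
    then show ?thesis using c3 t cs by (intro bexI[of _ e] bexI[of _ g]) simp_all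
  next
    case False
    show ?thesis
    proof (cases "j = i")
      case True
      have t: "Transposition.transpose i (Suc i) j = Suc i" using True by simp
      have WS: "W (Suc i) = W i \<star> s i" using i by simp
      show ?thesis
      proof (cases "g = s i")
        case True
        have "iv (W (Suc i)) \<star> a i \<star> e = s i \<star> iv (W i)"
          using i by (simp add: WS a_eq G.inv_mult_group G.m_assoc)
        then show ?thesis using True `j = i` t i by (intro bexI[of _ "a i"] bexI[of _ e]) simp_all
      next
        case False
        then have "g = iv (s i)" using g by simp
        moreover have "iv (W (Suc i)) \<star> e \<star> e = iv (s i) \<star> iv (W i)"
          using i by (simp add: WS G.inv_mult_group)
        ultimately show ?thesis using `j = i` t i by (intro bexI[of _ e] bexI[of _ e]) simp_all
      qed
    next
      case ne: False
      show ?thesis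
      proof (cases "j = Suc i")
        case True
        have t: "Transposition.transpose i (Suc i) j = i" using True by simp
        have WS: "W (Suc i) = W i \<star> s i" using i by simp
        show ?thesis
        proof (cases "g = s i")
          case True
          have "iv (W i) \<star> e \<star> e = s i \<star> iv (W (Suc i))"
            using i by (simp add: WS G.inv_mult_group)
          then show ?thesis using True `j = Suc i` t i by (intro bexI[of _ e] bexI[of _ e]) simp_all
        next
          case False
          then have "g = iv (s i)" using g by simp
          moreover have "iv (W i) \<star> iv (a i) \<star> e = iv (s i) \<star> iv (W (Suc i))"
            using i by (simp add: WS a_eq G.inv_mult_group G.m_assoc)
          ultimately show ?thesis using `j = Suc i` t i by (intro bexI[of _ "iv (a i)"] bexI[of _ e]) simp_all
        qed
      next
        case False
        then have lt: "Suc i < j" using ne `\<not> j < i` by simp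
        have t: "Transposition.transpose i (Suc i) j = j" using lt by simp
        have sC: "s (Suc i) \<in> C" using lt j by simp
        have e1: "s (Suc i) \<star> W j = W j \<star> s i" using W_shift[of "Suc i" j] lt j i by simp
        have e2: "s i \<star> iv (W j) = iv (W j) \<star> s (Suc i)" using G.gl_swap_inv[OF sC cs(2,1) e1] .
        have e1': "iv (s (Suc i)) \<star> W j = W j \<star> iv (s i)" using G.gl_swap_inv2[OF sC cs(2,1) e1] .
        have e3: "iv (s i) \<star> iv (W j) = iv (W j) \<star> iv (s (Suc i))"
          using G.gl_swap_inv[OF _ cs(2) _ e1'] sC cs by simp
        have bb: "s (Suc i) \<in> BB" "iv (s (Suc i)) \<in> BB" using lt j i by simp_all
        show ?thesis
        proof (cases "g = s i")
          case True
          then show ?thesis using e2 t bb cs sC by (intro bexI[of _ e] bexI[of _ "s (Suc i)"]) simp_all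
        next
          case False
          then have "g = iv (s i)" using g by simp
          then show ?thesis using e3 t bb cs sC by (intro bexI[of _ e] bexI[of _ "iv (s (Suc i))"]) simp_all
        qed
      qed
    qed
  qed
qed

lemma F2: "valid_word n w \<Longrightarrow> 1 \<le> p (cls n w) 1 \<and> p (cls n w) 1 \<le> n \<and>
   (\<exists>P\<in>AA. \<exists>\<beta>\<in>BB. cls n w = iv (W (p (cls n w) 1)) \<star> P \<star> \<beta>)"
proof (induction w)
  case Nil
  have "cls n [] = e" by (simp add: one_cls)
  then show ?case using n2 by (intro conjI bexI[of _ e]) simp_all
next
  case (Cons l w)
  obtain i b where l: "l = (i, b)" by (cases l)
  have i: "1 \<le> i" "i < n" using Cons.prems l by auto
  have vw: "valid_word n w" using Cons.prems by simp
  define g where "g = cls n [l]"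
  define x where "x = cls n w"
  have g: "g = s i \<or> g = iv (s i)"
  proof (cases b)
    case True then have "g = s i" by (simp add: g_def l s_cls)
    then show ?thesis ..
  next
    case False then have "g = iv (s i)" using s_inv_cls[OF i] by (simp add: g_def l)
    then show ?thesis ..
  qed
  have cg: "g \<in> C" "x \<in> C" using i g vw by (auto simp: x_def)
  have gx: "cls n (l # w) = g \<star> x" using Cons.prems vw by (simp add: g_def x_def mult_cls)
  have pg: "p g = Transposition.transpose i (Suc i)" using g i by (elim disjE) simp_all
  define j where "j = p x 1"
  have pgx: "p (g \<star> x) 1 = Transposition.transpose i (Suc i) j" using cg pg by (simp add: p_mult j_def)
  obtain P \<beta> where Pb: "P \<in> AA" "\<beta> \<in> BB" "x = iv (W j) \<star> P \<star> \<beta>" "1 \<le> j" "j \<le> n"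
    using Cons.IH vw by (auto simp: x_def j_def)
  obtain P' \<beta>' where Pb': "P' \<in> AA" "\<beta>' \<in> BB"
    "g \<star> iv (W j) = iv (W (Transposition.transpose i (Suc i) j)) \<star> P' \<star> \<beta>'"
    using letter[OF i g Pb(4,5)] by blast
  define j' where "j' = Transposition.transpose i (Suc i) j"
  have j': "1 \<le> j'" "j' \<le> n" using Pb(4,5) i by (auto simp: j'_def Transposition.transpose_def)
  have cc: "P \<in> C" "\<beta> \<in> C" "P' \<in> C" "\<beta>' \<in> C" "W j \<in> C" "W j' \<in> C"
    using Pb Pb' AA_C BB_C j' by auto
  have "g \<star> x = (g \<star> iv (W j)) \<star> P \<star> \<beta>" using Pb(3) cc cg by (simp add: G.m_assoc)
  also have "\<dots> = iv (W j') \<star> P' \<star> \<beta>' \<star> P \<star> \<beta>" using Pb'(3) by (simp add: j'_def)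
  also have "\<dots> = iv (W j') \<star> (P' \<star> (\<beta>' \<star> P \<star> iv \<beta>')) \<star> (\<beta>' \<star> \<beta>)" using cc by (simp add: G.m_assoc)
  finally have eq: "g \<star> x = iv (W j') \<star> (P' \<star> (\<beta>' \<star> P \<star> iv \<beta>')) \<star> (\<beta>' \<star> \<beta>)" .
  have mem: "P' \<star> (\<beta>' \<star> P \<star> iv \<beta>') \<in> AA" "\<beta>' \<star> \<beta> \<in> BB" using Pb Pb' BB_norm by simp_all
  show ?case unfolding gx using eq mem j' pgx by (auto simp: j'_def)
qed


lemma s_conj1: "1 \<le> i \<Longrightarrow> i < n \<Longrightarrow> \<exists>z\<in>C. s i = z \<star> s 1 \<star> iv z"
proof (induction i)
  case 0 then show ?case by simp
next
  case (Suc i)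
  show ?case
  proof (cases "i = 0")
    case True
    then show ?thesis using n2 by (intro bexI[of _ e]) simp_all
  next
    case False
    then obtain z where z: "z \<in> C" "s i = z \<star> s 1 \<star> iv z" using Suc by auto
    have c: "s i \<in> C" "s (Suc i) \<in> C" "s 1 \<in> C" using Suc False by auto
    have br: "s i \<star> s (Suc i) \<star> s i = s (Suc i) \<star> s i \<star> s (Suc i)" using s_braid[of i] Suc False by simp
    have "s (Suc i) = (s i \<star> s (Suc i)) \<star> s i \<star> iv (s i \<star> s (Suc i))"
      by (rule G.gl_braid_conj[OF c(1,2) br])
    also have "\<dots> = (s i \<star> s (Suc i) \<star> z) \<star> s 1 \<star> iv (s i \<star> s (Suc i) \<star> z)"
      using z c by (simp add: G.m_assoc G.inv_mult_group)
    finally show ?thesis using z c by (intro bexI[of _ "s i \<star> s (Suc i) \<star> z"]) simp_all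
  qed
qed

lemma a1: "a 1 = s 1 \<star> s 1"
  using n2 a_eq[of 1] by simp

lemma core: "g \<in> C \<Longrightarrow> p g 1 = 1 \<Longrightarrow> p g 2 = n \<Longrightarrow> \<exists>R\<in>AA. g \<star> a 1 \<star> iv g = iv R \<star> a (n - 1) \<star> R"
proof -
  assume g: "g \<in> C" "p g 1 = 1" "p g 2 = n"
  obtain w where w: "valid_word n w" "g = cls n w" using g(1) unfolding carrier_G by auto
  have "\<exists>P\<in>AA. \<exists>\<beta>\<in>BB. cls n w = iv (W (p (cls n w) 1)) \<star> P \<star> \<beta>"
    using F2[OF w(1)] by blast
  then have "\<exists>P\<in>AA. \<exists>\<beta>\<in>BB. g = iv (W 1) \<star> P \<star> \<beta>" using w(2) g(2) by simp
  then obtain P where P1: "P \<in> AA" and Pex: "\<exists>\<beta>\<in>BB. g = iv (W 1) \<star> P \<star> \<beta>" ..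
  from Pex obtain \<beta> where b1: "\<beta> \<in> BB" and b2: "g = iv (W 1) \<star> P \<star> \<beta>" ..
  note Pb = P1 b1 b2
  have cc: "P \<in> C" "\<beta> \<in> C" using Pb AA_C BB_C by auto
  have gPb: "g = P \<star> \<beta>" using Pb(3) cc by simp
  have "p g = p \<beta>" using gPb cc p_AA[OF Pb(1)] by (simp add: p_mult)
  then have pb2: "p \<beta> 2 = n" using g by simp
  have bc: "\<forall>i. 1 \<le> i \<and> i < n \<longrightarrow> (\<exists>Q\<in>AA. \<beta> \<star> a i \<star> iv \<beta> = Q \<star> a (p \<beta> (Suc i) - 1) \<star> iv Q)"
    using BB_conj[OF Pb(2)] by blast
  have "\<exists>Q\<in>AA. \<beta> \<star> a 1 \<star> iv \<beta> = Q \<star> a (p \<beta> (Suc 1) - 1) \<star> iv Q"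
    using bc[rule_format, of 1] n2 by simp
  then obtain Q where Q1: "Q \<in> AA" and Q2': "\<beta> \<star> a 1 \<star> iv \<beta> = Q \<star> a (p \<beta> (Suc 1) - 1) \<star> iv Q" ..
  note Q = Q1 Q2'
  have Q2: "\<beta> \<star> a 1 \<star> iv \<beta> = Q \<star> a (n - 1) \<star> iv Q" using Q pb2 by (simp add: numeral_2_eq_2)
  have cQ: "Q \<in> C" "a 1 \<in> C" "a (n - 1) \<in> C" using Q AA_C n2 by auto
  have "g \<star> a 1 \<star> iv g = P \<star> (\<beta> \<star> a 1 \<star> iv \<beta>) \<star> iv P"
    using gPb G.gl_conj_mult[OF cc cQ(2)] by simp
  also have "\<dots> = (P \<star> Q) \<star> a (n - 1) \<star> iv (P \<star> Q)"
    using Q2 G.gl_conj_mult[OF cc(1) cQ(1) cQ(3)] by simp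
  also have "\<dots> = iv (iv (P \<star> Q)) \<star> a (n - 1) \<star> iv (P \<star> Q)" using cc cQ by simp
  finally show ?thesis using Pb Q by (intro bexI[of _ "iv (P \<star> Q)"]) simp_all
qed

lemma fwd:
  assumes h: "h \<in> C" "half_twist n h" "p h = Transposition.transpose 1 n"
  shows "\<exists>R\<in>AA. h \<star> h = iv R \<star> a (n - 1) \<star> R"
proof -
  from h(2) obtain g where g1: "g \<in> C" and g2: "h = g \<star> sigma n 1 \<star> iv g"
    unfolding half_twist_def ..
  have g: "g \<in> C" "h = g \<star> s 1 \<star> iv g" using g1 g2 by (simp_all add: s_def)
  have c1: "s 1 \<in> C" using n2 by simp
  have ph: "p h = p g \<circ> Transposition.transpose 1 2 \<circ> p (iv g)"
    using g c1 n2 by (simp add: p_mult numeral_2_eq_2)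
  have inv1: "\<And>x. p (iv g) (p g x) = x"
  proof -
    fix x show "p (iv g) (p g x) = x" using fun_cong[OF conjunct1[OF p_inv[OF g(1)]], of x] by simp
  qed
  define u where "u = p g 1"
  define v where "v = p g 2"
  have "p h u = v" using ph inv1 by (simp add: u_def v_def)
  then have vu: "v = Transposition.transpose 1 n u" using h(3) by simp
  have uv: "u \<noteq> v" using inv1[of 1] inv1[of 2] by (auto simp: u_def v_def)
  have "u = 1 \<or> u = n" using vu uv by (auto simp: Transposition.transpose_def split: if_splits)
  then obtain g0 where g0: "g0 \<in> C" "p g0 1 = 1" "p g0 2 = n" "h = g0 \<star> s 1 \<star> iv g0"
  proof
    assume "u = 1"
    then have "v = n" using vu by simp
    then show ?thesis using that g `u = 1` by (simp add: u_def v_def)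
  next
    assume un: "u = n"
    then have "v = 1" using vu by simp
    have pg0: "p (g \<star> s 1) = p g \<circ> Transposition.transpose 1 2"
      using g c1 n2 by (simp add: p_mult numeral_2_eq_2)
    have hh: "h = g \<star> s 1 \<star> s 1 \<star> iv (g \<star> s 1)" using g c1 by (simp add: G.m_assoc G.inv_mult_group)
    have "p (g \<star> s 1) 1 = 1" "p (g \<star> s 1) 2 = n" using pg0 `v = 1` un by (simp_all add: u_def v_def)
    then show ?thesis by (intro that[of "g \<star> s 1"] hh) (use g c1 in simp_all)
  qed
  have "h \<star> h = g0 \<star> (s 1 \<star> s 1) \<star> iv g0" using g0 c1 by (simp add: G.m_assoc)
  then have "h \<star> h = g0 \<star> a 1 \<star> iv g0" by (simp only: a1)
  then show ?thesis using core[OF g0(1,2,3)] by simp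
qed

lemma AA_pow: "x \<in> AA \<Longrightarrow> x [^]\<^bsub>braid_group n\<^esub> (k::nat) \<in> AA"
  by (induction k) (simp_all add: AA_C)

lemma bwd:
  assumes P: "P \<in> AA"
  shows "\<exists>h\<in>C. half_twist n h \<and> p h = Transposition.transpose 1 n \<and>
     h \<star> h = iv P \<star> a (n - 1) \<star> P"
proof -
  define m where "m = n - 1"
  have m: "1 \<le> m" "m < n" "Suc m = n" using n2 by (auto simp: m_def)
  define V where "V = W m"
  have cc: "V \<in> C" "s m \<in> C" "P \<in> C" "s 1 \<in> C" using m P AA_C n2 by (auto simp: V_def)
  define h where "h = iv P \<star> (V \<star> s m \<star> iv V) \<star> P"
  have hC: "h \<in> C" using cc by (simp add: h_def)
  obtain z where z: "z \<in> C" "s m = z \<star> s 1 \<star> iv z" using s_conj1[OF m(1,2)] by blast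
  have ht: "half_twist n h"
  proof -
    have "h = (iv P \<star> V \<star> z) \<star> sigma n 1 \<star> inv\<^bsub>braid_group n\<^esub> (iv P \<star> V \<star> z)"
      using cc z by (simp add: h_def s_def[symmetric] G.m_assoc G.inv_mult_group)
    then show ?thesis unfolding half_twist_def using cc z by (intro bexI[of _ "iv P \<star> V \<star> z"]) simp_all
  qed
  have pP: "p P = id" "p (iv P) = id" using P p_AA by simp_all
  define f where "f = p V"
  define f' where "f' = p (iv V)"
  have ff1: "\<And>x. f' (f x) = x"
  proof -
    fix x show "f' (f x) = x" using fun_cong[OF conjunct1[OF p_inv[OF cc(1)]], of x] by (simp add: f_def f'_def)
  qed
  have ff2: "\<And>x. f (f' x) = x"
  proof -
    fix x show "f (f' x) = x" using fun_cong[OF conjunct2[OF p_inv[OF cc(1)]], of x] by (simp add: f_def f'_def)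
  qed
  note ff = ff1 ff2
  have fW: "f m = 1" "f n = n" using p_W[OF m(1)] m by (auto simp: f_def V_def)
  have ph: "p h = f \<circ> Transposition.transpose m n \<circ> f'"
    using cc pP m by (simp add: h_def p_mult f_def f'_def)
  have pt: "p h = Transposition.transpose 1 n"
  proof
    fix x
    define y where "y = f' x"
    have "f (Transposition.transpose m n y) = Transposition.transpose 1 n (f y)"
    proof (cases "y = m")
      case True then show ?thesis using fW m by simp
    next
      case False
      show ?thesis
      proof (cases "y = n")
        case True then show ?thesis using fW m by simp
      next
        case False
        have "f y \<noteq> 1"
        proof
          assume "f y = 1"
          then have "f' (f y) = f' (f m)" using fW by simp
          then show False using `y \<noteq> m` ff1 by simp
        qed
        moreover have "f y \<noteq> n"
        proof
          assume "f y = n"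
          then have "f' (f y) = f' (f n)" using fW by simp
          then show False using False ff1 by simp
        qed
        ultimately show ?thesis using False `y \<noteq> m` by simp
      qed
    qed
    then have key: "f (Transposition.transpose m n y) = Transposition.transpose 1 n (f y)" .
    have "p h x = f (Transposition.transpose m n y)" using ph by (simp add: y_def)
    also have "\<dots> = Transposition.transpose 1 n (f y)" by (rule key)
    also have "f y = x" using ff2 by (simp add: y_def)
    finally show "p h x = Transposition.transpose 1 n x" .
  qed
  have am: "a m = V \<star> s m \<star> s m \<star> iv V" using a_eq[OF m(1,2)] by (simp add: V_def)
  have hh: "h \<star> h = iv P \<star> a m \<star> P" using cc unfolding am by (simp add: h_def G.m_assoc)
  show ?thesis using hC ht pt hh by (intro bexI[of _ h]) (simp_all add: m_def)
qed

end

theorem theorem3p6: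
  fixes n k :: nat and b :: "bword set"
  assumes "n \<ge> 2" and "k \<ge> 1" and "b \<in> carrier (braid_group n)"
  shows "(\<exists>h \<in> carrier (braid_group n). half_twist n h \<and> braid_perm h = transpose 1 n
            \<and> b = h [^]\<^bsub>braid_group n\<^esub> (2 * k))
     \<longleftrightarrow> (b \<in> combed n \<and>
          (\<exists>P \<in> combed n. b = inv\<^bsub>braid_group n\<^esub> P \<otimes>\<^bsub>braid_group n\<^esub>
                (a_elem n (n - 1) [^]\<^bsub>braid_group n\<^esub> k) \<otimes>\<^bsub>braid_group n\<^esub> P))"
proof -
  interpret braidctx n using assms(1) by unfold_locales
  have pw: "\<And>h. h \<in> carrier (braid_group n) \<Longrightarrow> h [^]\<^bsub>braid_group n\<^esub> (2 * k) =
     (h \<star> h) [^]\<^bsub>braid_group n\<^esub> k"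
  proof -
    fix h assume hC: "h \<in> carrier (braid_group n)"
    have "h [^]\<^bsub>braid_group n\<^esub> (2::nat) = h \<star> h" using hC by (simp add: numeral_2_eq_2)
    then show "h [^]\<^bsub>braid_group n\<^esub> (2 * k) = (h \<star> h) [^]\<^bsub>braid_group n\<^esub> k"
      using G.nat_pow_pow[OF hC, of 2 k] by simp
  qed
  have an: "a (n - 1) \<in> AA" "a (n - 1) \<in> C" using assms(1) by auto
  show ?thesis
  proof
    assume "\<exists>h \<in> carrier (braid_group n). half_twist n h \<and> braid_perm h = transpose 1 n
            \<and> b = h [^]\<^bsub>braid_group n\<^esub> (2 * k)"
    then obtain h where h1: "h \<in> C" and h2: "half_twist n h \<and> braid_perm h = transpose 1 n
            \<and> b = h [^]\<^bsub>braid_group n\<^esub> (2 * k)" ..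
    have h: "h \<in> C" "half_twist n h" "p h = Transposition.transpose 1 n"
      "b = h [^]\<^bsub>braid_group n\<^esub> (2 * k)" using h1 h2 by (simp_all add: p_def)
    obtain R where R: "R \<in> AA" "h \<star> h = iv R \<star> a (n - 1) \<star> R" using fwd[OF h(1,2,3)] by blast
    have cR: "R \<in> C" "iv R \<in> C" using R AA_C by auto
    have "b = (iv R \<star> a (n - 1) \<star> iv (iv R)) [^]\<^bsub>braid_group n\<^esub> k" using h(4) pw[OF h(1)] R cR by simp
    also have "\<dots> = iv R \<star> (a (n - 1) [^]\<^bsub>braid_group n\<^esub> k) \<star> R"
      using G.gl_conj_pow[OF cR(2) an(2)] cR by simp
    finally have bR: "b = iv R \<star> (a (n - 1) [^]\<^bsub>braid_group n\<^esub> k) \<star> R" .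
    have "b \<in> AA" using bR R AA_pow[OF an(1)] by simp
    then show "b \<in> combed n \<and> (\<exists>P \<in> combed n. b = inv\<^bsub>braid_group n\<^esub> P \<otimes>\<^bsub>braid_group n\<^esub>
                (a_elem n (n - 1) [^]\<^bsub>braid_group n\<^esub> k) \<otimes>\<^bsub>braid_group n\<^esub> P)"
      unfolding AA_def[symmetric] a_def[symmetric] using bR R `b \<in> AA` by blast
  next
    assume "b \<in> combed n \<and> (\<exists>P \<in> combed n. b = inv\<^bsub>braid_group n\<^esub> P \<otimes>\<^bsub>braid_group n\<^esub>
                (a_elem n (n - 1) [^]\<^bsub>braid_group n\<^esub> k) \<otimes>\<^bsub>braid_group n\<^esub> P)"
    then have "\<exists>P \<in> AA. b = iv P \<star> (a (n - 1) [^]\<^bsub>braid_group n\<^esub> k) \<star> P"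
      unfolding AA_def[symmetric] a_def[symmetric] by (elim conjE)
    then obtain P where P1: "P \<in> AA" and P2: "b = iv P \<star> (a (n - 1) [^]\<^bsub>braid_group n\<^esub> k) \<star> P" ..
    note P = P1 P2
    obtain h where h: "h \<in> C" "half_twist n h" "p h = Transposition.transpose 1 n"
      "h \<star> h = iv P \<star> a (n - 1) \<star> P" using bwd[OF P(1)] by blast
    have cP: "P \<in> C" "iv P \<in> C" using P AA_C by auto
    have "h [^]\<^bsub>braid_group n\<^esub> (2 * k) = (iv P \<star> a (n - 1) \<star> iv (iv P)) [^]\<^bsub>braid_group n\<^esub> k"
      using pw[OF h(1)] h(4) cP by simp
    also have "\<dots> = b" using G.gl_conj_pow[OF cP(2) an(2)] cP P(2) by simp
    finally show "\<exists>h \<in> carrier (braid_group n). half_twist n h \<and> braid_perm h = transpose 1 n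
            \<and> b = h [^]\<^bsub>braid_group n\<^esub> (2 * k)"
      using h by (intro bexI[of _ h]) (simp_all add: p_def)
  qed
qed

end
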